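(* Fix positive integers $M\le N$ and $K$, and constants $T>0$, $\alpha_0>0$, $\eta\in(0,1]$, $m>0$, $p_{\max}>0$, $\Pr_{out,0}>0$, $q\ge 0$, $c_{ij}>0$ and $c_j>0$ for $i\in\{1,\dots,M\}$, $j\in\Theta:=\{1,\dots,N\}$, and $Eu_{i,k}\ge 0$ for $i\in\{1,\dots,M\}$, $k\in\{1,\dots,K\}$. The optimization variables are the real numbers $\tilde p_{i,k}$ ($1\le i\le M$, $1\le k\le K$), $\tilde p'_{j,k}$ ($j\in\Theta$, $1\le k\le K$) and $E_{i\to i',k}$ ($i\neq i'$ in $\{1,\dots,M\}$, $1\le k\le K$). For each $k$ define $$\Pr\{A_k\}=\sum_{n=0}^{M-1}\ \sum_{\Phi\subseteq\Theta,\,|\Phi|=n}\ \prod_{j\in\Theta\setminus\Phi}\Big(\sum_{i=1}^M c_{ij}e^{-m\tilde p_{i,k}}\Big),$$ $$\Pr\{B_k\}=\sum_{n=M}^{N}\ \sum_{\Phi\subseteq\Theta,\,|\Phi|=n}\left[\prod_{j\in\Theta\setminus\Phi}\Big(\sum_{i=1}^M c_{ij}e^{-m\tilde p_{i,k}}\Big)\right]\cdot\left[\sum_{\tau=0}^{M-1}\ \sum_{\psi\subseteq\Phi,\,|\psi|=\tau}\ \prod_{j\in\Phi\setminus\psi} c_j e^{-m\tilde p'_{j,k}}\right],$$ (empty products equal $1$), and $\Pr_{out,k}=\Pr\{A_k\}+\Pr\{B_k\}$. Let $$V'=M\alpha_0T\sum_{k=1}^K\Pr_{out,k}+q\sum_{k=1}^K\Big(\sum_{i=1}^M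 Te^{\tilde p_{i,k}}+(1-\eta)\sum_{i=1}^M\sum_{i'\neq i}E_{i\to i',k}+\sum_{j=1}^N Te^{\tilde p'_{j,k}}\Big).$$ Consider the problem P3: minimize $V'$ subject to, for all $i,j,k$: (i) $\Pr_{out,k}\le \Pr_{out,0}$; (ii) the energy causality constraint $$\sum_{l=1}^k Te^{\tilde p_{i,l}}+\sum_{l=1}^k\sum_{i'\neq i}E_{i\to i',l}-\eta\sum_{l=1}^k\sum_{i'\neq i}E_{i'\to i,l}\le\sum_{l=1}^k Eu_{i,l};$$ (iii) $e^{\tilde p_{i,k}}\le p_{\max}$ and $e^{\tilde p'_{j,k}}\le p_{\max}$; (iv) $E_{i\to i',k}\ge 0$. Then P3 is a convex optimization problem: $V'$ is a jointly convex function of all variables $(\tilde p_{i,k},\tilde p'_{j,k},E_{i\to i',k})$, and the feasible set defined by (i)–(iv) is convex.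
   Context: Setting: $M$ energy-harvesting users transmit to a destination via $N$ network-coding relays over $K$ transmission periods; $p_{i,k}=e^{\tilde p_{i,k}}$ is the transmit power of user $i$ in period $k$, $p'_{j,k}=e^{\tilde p'_{j,k}}$ the transmit power of relay $j$, and $E_{i\to i',k}\ge0$ the energy user $i$ transfers wirelessly to user $i'$ in period $k$ with transfer efficiency $\eta$. The constants $c_{ij}$, $c_j$ collect channel parameters so that single-link outage probabilities are approximated by $c_{ij}p_{i,k}^{-m}$ and $c_j(p'_{j,k})^{-m}$ (Nakagami-$m$ fading parameter $m$); $\Pr_{out,k}$ above is the resulting approximation of the network outage probability in period $k$. $Eu_{i,k}$ is the energy harvested by user $i$ available from period $k$ on, and $q$ is the fixed Dinkelbach parameter (current energy-efficiency estimate). *)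

theory Defs
  imports "HOL-Analysis.Analysis"
begin

text \<open>Optimization variables: (pt, pr, E) with pt i k = tilde p_{i,k},
  pr j k = tilde p'_{j,k}, E i i' k = E_{i -> i', k}.  Only indices in range matter.\<close>
type_synonym vars = "(nat \<Rightarrow> nat \<Rightarrow> real) \<times> (nat \<Rightarrow> nat \<Rightarrow> real) \<times> (nat \<Rightarrow> nat \<Rightarrow> nat \<Rightarrow> real)"

definition vcomb :: "real \<Rightarrow> vars \<Rightarrow> vars \<Rightarrow> vars" where
  "vcomb t x y =
     (case x of (p1, r1, E1) \<Rightarrow> case y of (p2, r2, E2) \<Rightarrow>
       ((\<lambda>i k. (1 - t) * p1 i k + t * p2 i k),
        (\<lambda>j k. (1 - t) * r1 j k + t * r2 j k),
        (\<lambda>i i' k. (1 - t) * E1 i i' k + t * E2 i i' k)))"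

definition convex_fun_vars :: "(vars \<Rightarrow> real) \<Rightarrow> bool" where
  "convex_fun_vars f \<longleftrightarrow>
     (\<forall>x y t. 0 \<le> t \<and> t \<le> 1 \<longrightarrow> f (vcomb t x y) \<le> (1 - t) * f x + t * f y)"

definition convex_set_vars :: "vars set \<Rightarrow> bool" where
  "convex_set_vars S \<longleftrightarrow>
     (\<forall>x\<in>S. \<forall>y\<in>S. \<forall>t. 0 \<le> t \<and> t \<le> 1 \<longrightarrow> vcomb t x y \<in> S)"

definition PrA :: "nat \<Rightarrow> nat \<Rightarrow> real \<Rightarrow> (nat \<Rightarrow> nat \<Rightarrow> real) \<Rightarrow> (nat \<Rightarrow> nat \<Rightarrow> real) \<Rightarrow> nat \<Rightarrow> real" where
  "PrA M N m c pt k =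
     (\<Sum>n\<in>{0..<M}. \<Sum>\<Phi>\<in>{\<Phi>. \<Phi> \<subseteq> {1..N} \<and> card \<Phi> = n}.
        \<Prod>j\<in>{1..N} - \<Phi>. (\<Sum>i=1..M. c i j * exp (- m * pt i k)))"

definition PrB :: "nat \<Rightarrow> nat \<Rightarrow> real \<Rightarrow> (nat \<Rightarrow> nat \<Rightarrow> real) \<Rightarrow> (nat \<Rightarrow> real)
    \<Rightarrow> (nat \<Rightarrow> nat \<Rightarrow> real) \<Rightarrow> (nat \<Rightarrow> nat \<Rightarrow> real) \<Rightarrow> nat \<Rightarrow> real" where
  "PrB M N m c cr pt pr k =
     (\<Sum>n\<in>{M..N}. \<Sum>\<Phi>\<in>{\<Phi>. \<Phi> \<subseteq> {1..N} \<and> card \<Phi> = n}.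
        (\<Prod>j\<in>{1..N} - \<Phi>. (\<Sum>i=1..M. c i j * exp (- m * pt i k))) *
        (\<Sum>\<tau>\<in>{0..<M}. \<Sum>\<psi>\<in>{\<psi>. \<psi> \<subseteq> \<Phi> \<and> card \<psi> = \<tau>}.
           \<Prod>j\<in>\<Phi> - \<psi>. cr j * exp (- m * pr j k)))"

definition Prout :: "nat \<Rightarrow> nat \<Rightarrow> real \<Rightarrow> (nat \<Rightarrow> nat \<Rightarrow> real) \<Rightarrow> (nat \<Rightarrow> real)
    \<Rightarrow> (nat \<Rightarrow> nat \<Rightarrow> real) \<Rightarrow> (nat \<Rightarrow> nat \<Rightarrow> real) \<Rightarrow> nat \<Rightarrow> real" where
  "Prout M N m c cr pt pr k = PrA M N m c pt k + PrB M N m c cr pt pr k"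

definition Vobj :: "nat \<Rightarrow> nat \<Rightarrow> nat \<Rightarrow> real \<Rightarrow> real \<Rightarrow> real \<Rightarrow> real \<Rightarrow> real
    \<Rightarrow> (nat \<Rightarrow> nat \<Rightarrow> real) \<Rightarrow> (nat \<Rightarrow> real) \<Rightarrow> vars \<Rightarrow> real" where
  "Vobj M N K T \<alpha>0 \<eta> m q c cr v =
     (case v of (pt, pr, E) \<Rightarrow>
        real M * \<alpha>0 * T * (\<Sum>k=1..K. Prout M N m c cr pt pr k)
        + q * (\<Sum>k=1..K. (\<Sum>i=1..M. T * exp (pt i k))
              + (1 - \<eta>) * (\<Sum>i=1..M. \<Sum>i'\<in>{1..M} - {i}. E i i' k)
              + (\<Sum>j=1..N. T * exp (pr j k))))"

definition feasible :: "nat \<Rightarrow> nat \<Rightarrow> nat \<Rightarrow> real \<Rightarrow> real \<Rightarrow> real \<Rightarrow> real \<Rightarrow> real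
    \<Rightarrow> (nat \<Rightarrow> nat \<Rightarrow> real) \<Rightarrow> (nat \<Rightarrow> real) \<Rightarrow> (nat \<Rightarrow> nat \<Rightarrow> real) \<Rightarrow> vars set" where
  "feasible M N K T \<eta> m pmax Pr0 c cr Eu =
     {(pt, pr, E). \<forall>k\<in>{1..K}.
        Prout M N m c cr pt pr k \<le> Pr0
      \<and> (\<forall>i\<in>{1..M}.
           (\<Sum>l=1..k. T * exp (pt i l)) + (\<Sum>l=1..k. \<Sum>i'\<in>{1..M} - {i}. E i i' l)
             - \<eta> * (\<Sum>l=1..k. \<Sum>i'\<in>{1..M} - {i}. E i' i l)
           \<le> (\<Sum>l=1..k. Eu i l))
      \<and> (\<forall>i\<in>{1..M}. exp (pt i k) \<le> pmax)
      \<and> (\<forall>j\<in>{1..N}. exp (pr j k) \<le> pmax)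
      \<and> (\<forall>i\<in>{1..M}. \<forall>i'\<in>{1..M}. i \<noteq> i' \<longrightarrow> 0 \<le> E i i' k)}"

end

theory Submission
  imports Defs
begin

declare split_paired_All [simp del] split_paired_Ex [simp del]

lemma amgm:
  fixes a b t :: real
  assumes "0 \<le> a" "0 \<le> b" "0 < t" "t < 1"
  shows "a powr (1-t) * b powr t \<le> (1-t)*a + t*b"
proof (cases "a = 0 \<or> b = 0")
  case True then show ?thesis using assms by auto
next
  case False then show ?thesis using assms Youngs_inequality_0[of "1-t" t a b] by auto
qed

lemma holder2:
  fixes a b c d t :: real
  assumes "0 \<le> a" "0 \<le> b" "0 \<le> c" "0 \<le> d" "0 < t" "t < 1"
  shows "a powr (1-t) * b powr t + c powr (1-t) * d powr t \<le> (a+c) powr (1-t) * (b+d) powr t"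
proof (cases "a + c = 0 \<or> b + d = 0")
  case True
  then have "(a = 0 \<and> c = 0) \<or> (b = 0 \<and> d = 0)" using assms by linarith
  then show ?thesis using assms by auto
next
  case False
  define A where "A = a + c"
  define B where "B = b + d"
  have A: "A > 0" "B > 0" using False assms A_def B_def by auto
  have e1: "a powr (1-t) * b powr t = A powr (1-t) * B powr t * ((a/A) powr (1-t) * (b/B) powr t)"
    using A assms by (simp add: powr_divide)
  have e2: "c powr (1-t) * d powr t = A powr (1-t) * B powr t * ((c/A) powr (1-t) * (d/B) powr t)"
    using A assms by (simp add: powr_divide)
  have i1: "(a/A) powr (1-t) * (b/B) powr t \<le> (1-t)*(a/A) + t*(b/B)"
    using amgm[of "a/A" "b/B" t] assms A by simp
  have i2: "(c/A) powr (1-t) * (d/B) powr t \<le> (1-t)*(c/A) + t*(d/B)"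
    using amgm[of "c/A" "d/B" t] assms A by simp
  have s: "(1-t)*(a/A) + t*(b/B) + ((1-t)*(c/A) + t*(d/B)) = 1"
  proof -
    have "a/A + c/A = (a+c)/A" by (rule add_divide_distrib[symmetric])
    also have "\<dots> = 1" using A A_def by simp
    finally have "a/A + c/A = 1" .
    moreover have "b/B + d/B = (b+d)/B" by (rule add_divide_distrib[symmetric])
    moreover have "(b+d)/B = 1" using A B_def by simp
    moreover have "(1-t)*(a/A) + t*(b/B) + ((1-t)*(c/A) + t*(d/B)) = (1-t)*(a/A + c/A) + t*(b/B + d/B)"
      by (simp add: algebra_simps)
    ultimately show ?thesis by simp
  qed
  have pos: "0 \<le> A powr (1-t) * B powr t" by simp
  have "a powr (1-t) * b powr t + c powr (1-t) * d powr t
      = A powr (1-t) * B powr t * ((a/A) powr (1-t) * (b/B) powr t + (c/A) powr (1-t) * (d/B) powr t)"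
    using e1 e2 by (simp add: algebra_simps)
  also have "\<dots> \<le> A powr (1-t) * B powr t * 1"
    using i1 i2 s pos by (intro mult_left_mono) auto
  finally show ?thesis unfolding A_def B_def by simp
qed



definition vp :: "vars \<Rightarrow> nat \<Rightarrow> nat \<Rightarrow> real" where "vp v = fst v"
definition vr :: "vars \<Rightarrow> nat \<Rightarrow> nat \<Rightarrow> real" where "vr v = fst (snd v)"
definition vE :: "vars \<Rightarrow> nat \<Rightarrow> nat \<Rightarrow> nat \<Rightarrow> real" where "vE v = snd (snd v)"

lemma vcomb_acc:
  "vp (vcomb t x y) i k = (1-t) * vp x i k + t * vp y i k"
  "vr (vcomb t x y) i k = (1-t) * vr x i k + t * vr y i k"
  "vE (vcomb t x y) i i' k = (1-t) * vE x i i' k + t * vE y i i' k"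
  by (cases x; cases y; simp add: vcomb_def vp_def vr_def vE_def)+

lemma vcomb_01: "vcomb 0 x y = x" "vcomb 1 x y = y"
  by (cases x; cases y; simp add: vcomb_def)+

definition LC :: "(vars \<Rightarrow> real) \<Rightarrow> bool" where
  "LC g \<longleftrightarrow> (\<forall>x. 0 \<le> g x) \<and>
     (\<forall>x y t. 0 < t \<and> t < 1 \<longrightarrow> g (vcomb t x y) \<le> g x powr (1-t) * g y powr t)"

definition LIN :: "(vars \<Rightarrow> real) \<Rightarrow> bool" where
  "LIN g \<longleftrightarrow> (\<forall>x y t. g (vcomb t x y) = (1-t) * g x + t * g y)"

lemma LC_const: "0 \<le> a \<Longrightarrow> LC (\<lambda>v. a)"
  unfolding LC_def
proof (intro conjI allI impI)
  fix x y :: vars and t :: real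
  assume a: "0 \<le> a" and t: "0 < t \<and> t < 1"
  show "a \<le> a powr (1-t) * a powr t"
  proof (cases "a = 0")
    case False
    then show ?thesis by (simp add: powr_add[symmetric])
  qed simp
qed

lemma LC_exp: "LIN L \<Longrightarrow> LC (\<lambda>v. exp (L v))"
  unfolding LC_def LIN_def by (simp add: powr_def exp_add)

lemma LC_I:
  assumes "\<And>x. 0 \<le> g x"
    and "\<And>x y t. 0 < t \<Longrightarrow> t < 1 \<Longrightarrow> g (vcomb t x y) \<le> g x powr (1-t) * g y powr t"
  shows "LC g"
  using assms unfolding LC_def by blast

lemma LC_D:
  assumes "LC g"
  shows "0 \<le> g x" "0 < t \<Longrightarrow> t < 1 \<Longrightarrow> g (vcomb t x y) \<le> g x powr (1-t) * g y powr t"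
  using assms unfolding LC_def by blast+

lemma LC_mult: "LC f \<Longrightarrow> LC g \<Longrightarrow> LC (\<lambda>v. f v * g v)"
proof (rule LC_I)
  fix x :: vars
  assume f: "LC f" and g: "LC g"
  show "0 \<le> f x * g x" using LC_D[OF f] LC_D[OF g] by (meson mult_nonneg_nonneg)
next
  fix x y :: vars and t :: real
  assume f: "LC f" and g: "LC g" and t: "0 < t" "t < 1"
  have "f (vcomb t x y) * g (vcomb t x y) \<le> (f x powr (1 - t) * f y powr t) * (g x powr (1 - t) * g y powr t)"
    using LC_D[OF f] LC_D[OF g] t by (intro mult_mono) auto
  also have "\<dots> = (f x * g x) powr (1-t) * (f y * g y) powr t"
    using LC_D(1)[OF f] LC_D(1)[OF g] by (simp add: powr_mult)
  finally show "f (vcomb t x y) * g (vcomb t x y) \<le> (f x * g x) powr (1-t) * (f y * g y) powr t" .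
qed

lemma LC_add: "LC f \<Longrightarrow> LC g \<Longrightarrow> LC (\<lambda>v. f v + g v)"
proof (rule LC_I)
  fix x :: vars
  assume f: "LC f" and g: "LC g"
  show "0 \<le> f x + g x" using LC_D[OF f] LC_D[OF g] by (meson add_nonneg_nonneg)
next
  fix x y :: vars and t :: real
  assume f: "LC f" and g: "LC g" and t: "0 < t" "t < 1"
  have "f (vcomb t x y) + g (vcomb t x y) \<le> f x powr (1 - t) * f y powr t + g x powr (1 - t) * g y powr t"
    using LC_D[OF f] LC_D[OF g] t by (intro add_mono) auto
  also have "\<dots> \<le> (f x + g x) powr (1-t) * (f y + g y) powr t"
    using LC_D(1)[OF f] LC_D(1)[OF g] t by (intro holder2) auto
  finally show "f (vcomb t x y) + g (vcomb t x y) \<le> (f x + g x) powr (1-t) * (f y + g y) powr t" .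
qed

lemma LC_sum: "(\<And>s. s \<in> S \<Longrightarrow> LC (f s)) \<Longrightarrow> LC (\<lambda>v. \<Sum>s\<in>S. f s v)"
proof (induction S rule: infinite_finite_induct)
  case (infinite S) then show ?case by (simp add: LC_const)
next
  case empty then show ?case by (simp add: LC_const)
next
  case (insert x F)
  then show ?case by (simp add: LC_add)
qed

lemma LC_prod: "(\<And>s. s \<in> S \<Longrightarrow> LC (f s)) \<Longrightarrow> LC (\<lambda>v. \<Prod>s\<in>S. f s v)"
proof (induction S rule: infinite_finite_induct)
  case (infinite S) then show ?case by (simp add: LC_const)
next
  case empty then show ?case by (simp add: LC_const)
next
  case (insert x F)
  then show ?case by (simp add: LC_mult)
qed

lemma LC_conv: "LC g \<Longrightarrow> convex_fun_vars g"
  unfolding convex_fun_vars_def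
proof (intro allI impI)
  fix x y :: vars and t :: real
  assume g: "LC g" and t: "0 \<le> t \<and> t \<le> 1"
  show "g (vcomb t x y) \<le> (1 - t) * g x + t * g y"
  proof (cases "t = 0 \<or> t = 1")
    case True then show ?thesis by (auto simp: vcomb_01)
  next
    case False
    then have "g (vcomb t x y) \<le> g x powr (1-t) * g y powr t" using g t unfolding LC_def by auto
    also have "\<dots> \<le> (1 - t) * g x + t * g y" using g t False unfolding LC_def by (intro amgm) auto
    finally show ?thesis .
  qed
qed

lemma LIN_conv: "LIN g \<Longrightarrow> convex_fun_vars g"
  unfolding LIN_def convex_fun_vars_def by simp

lemma LIN_I: "(\<And>x y t. g (vcomb t x y) = (1-t) * g x + t * g y) \<Longrightarrow> LIN g"
  unfolding LIN_def by blast

lemma LIN_D: "LIN g \<Longrightarrow> g (vcomb t x y) = (1-t) * g x + t * g y"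
  unfolding LIN_def by blast

lemma LIN_sum: "(\<And>s. s \<in> S \<Longrightarrow> LIN (f s)) \<Longrightarrow> LIN (\<lambda>v. \<Sum>s\<in>S. f s v)"
  by (rule LIN_I) (simp add: LIN_D sum.distrib sum_distrib_left cong: sum.cong)

lemma LIN_scale: "LIN f \<Longrightarrow> LIN (\<lambda>v. a * f v)"
  by (rule LIN_I) (simp add: LIN_D algebra_simps)

lemma LIN_add: "LIN f \<Longrightarrow> LIN g \<Longrightarrow> LIN (\<lambda>v. f v + g v)"
  by (rule LIN_I) (simp add: LIN_D algebra_simps)

lemma LIN_diff: "LIN f \<Longrightarrow> LIN g \<Longrightarrow> LIN (\<lambda>v. f v - g v)"
  by (rule LIN_I) (simp add: LIN_D algebra_simps)

lemma LIN_vp: "LIN (\<lambda>v. a * vp v i k)" and LIN_vr: "LIN (\<lambda>v. a * vr v i k)"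
  and LIN_vE: "LIN (\<lambda>v. vE v i i' k)"
  unfolding LIN_def by (simp_all add: vcomb_acc algebra_simps)

lemma LIN_vp1: "LIN (\<lambda>v. vp v i k)" and LIN_vr1: "LIN (\<lambda>v. vr v i k)"
  unfolding LIN_def by (simp_all add: vcomb_acc)

lemma CV_add: "convex_fun_vars f \<Longrightarrow> convex_fun_vars g \<Longrightarrow> convex_fun_vars (\<lambda>v. f v + g v)"
  unfolding convex_fun_vars_def
proof (intro allI impI)
  fix x y :: vars and t :: real
  assume f: "\<forall>x y t. 0 \<le> t \<and> t \<le> 1 \<longrightarrow> f (vcomb t x y) \<le> (1 - t) * f x + t * f y"
    and g: "\<forall>x y t. 0 \<le> t \<and> t \<le> 1 \<longrightarrow> g (vcomb t x y) \<le> (1 - t) * g x + t * g y"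
    and t: "0 \<le> t \<and> t \<le> 1"
  have "f (vcomb t x y) + g (vcomb t x y) \<le> ((1 - t) * f x + t * f y) + ((1 - t) * g x + t * g y)"
    using f g t by (intro add_mono) blast+
  then show "f (vcomb t x y) + g (vcomb t x y) \<le> (1 - t) * (f x + g x) + t * (f y + g y)"
    by (simp add: algebra_simps)
qed

lemma CV_scale: "0 \<le> a \<Longrightarrow> convex_fun_vars f \<Longrightarrow> convex_fun_vars (\<lambda>v. a * f v)"
  unfolding convex_fun_vars_def
proof (intro allI impI)
  fix x y :: vars and t :: real
  assume a: "0 \<le> a" and f: "\<forall>x y t. 0 \<le> t \<and> t \<le> 1 \<longrightarrow> f (vcomb t x y) \<le> (1 - t) * f x + t * f y"
    and t: "0 \<le> t \<and> t \<le> 1"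
  have "a * f (vcomb t x y) \<le> a * ((1 - t) * f x + t * f y)" using f t a by (intro mult_left_mono) auto
  then show "a * f (vcomb t x y) \<le> (1 - t) * (a * f x) + t * (a * f y)" by (simp add: algebra_simps)
qed

lemma CV_sum: "(\<And>s. s \<in> S \<Longrightarrow> convex_fun_vars (f s)) \<Longrightarrow> convex_fun_vars (\<lambda>v. \<Sum>s\<in>S. f s v)"
proof (induction S rule: infinite_finite_induct)
  case (infinite S) then show ?case by (simp add: convex_fun_vars_def)
next
  case empty then show ?case by (simp add: convex_fun_vars_def)
next
  case (insert x F)
  then show ?case by (simp add: CV_add)
qed

lemma CV_sub: "convex_fun_vars g \<Longrightarrow> g x \<le> b \<Longrightarrow> g y \<le> b \<Longrightarrow> 0 \<le> t \<Longrightarrow> t \<le> 1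
   \<Longrightarrow> g (vcomb t x y) \<le> b"
proof -
  assume g: "convex_fun_vars g" and h: "g x \<le> b" "g y \<le> b" "0 \<le> t" "t \<le> 1"
  have 1: "g (vcomb t x y) \<le> (1 - t) * g x + t * g y" using g h unfolding convex_fun_vars_def by blast
  have "(1 - t) * g x + t * g y \<le> (1-t) * b + t * b"
    using h by (intro add_mono mult_left_mono) auto
  then show ?thesis using 1 by (simp add: algebra_simps)
qed

lemma LC_Prout:
  assumes c: "\<And>i j. i \<in> {1..M} \<Longrightarrow> j \<in> {1..N} \<Longrightarrow> 0 < c i j"
    and cr: "\<And>j. j \<in> {1..N} \<Longrightarrow> 0 < cr j"
  shows "LC (\<lambda>v. Prout M N m c cr (vp v) (vr v) k)"
  unfolding Prout_def PrA_def PrB_def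
  apply (intro LC_add LC_sum LC_prod LC_mult LC_exp LIN_vp LIN_vr LC_const)
  using c cr by (auto intro!: less_imp_le simp: subset_iff)

lemma Vobj_eq:
  "Vobj M N K T \<alpha>0 \<eta> m q c cr = (\<lambda>v.
     real M * \<alpha>0 * T * (\<Sum>k=1..K. Prout M N m c cr (vp v) (vr v) k)
        + q * (\<Sum>k=1..K. (\<Sum>i=1..M. T * exp (vp v i k))
              + (1 - \<eta>) * (\<Sum>i=1..M. \<Sum>i'\<in>{1..M} - {i}. vE v i i' k)
              + (\<Sum>j=1..N. T * exp (vr v j k))))"
  by (rule ext) (auto simp: Vobj_def vp_def vr_def vE_def split: prod.splits)

lemma feas_iff:
  "v \<in> feasible M N K T \<eta> m pmax Pr0 c cr Eu \<longleftrightarrow>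
    (\<forall>k\<in>{1..K}.
        Prout M N m c cr (vp v) (vr v) k \<le> Pr0
      \<and> (\<forall>i\<in>{1..M}.
           (\<Sum>l=1..k. T * exp (vp v i l)) + ((\<Sum>l=1..k. \<Sum>i'\<in>{1..M} - {i}. vE v i i' l)
             - \<eta> * (\<Sum>l=1..k. \<Sum>i'\<in>{1..M} - {i}. vE v i' i l))
           \<le> (\<Sum>l=1..k. Eu i l))
      \<and> (\<forall>i\<in>{1..M}. exp (vp v i k) \<le> pmax)
      \<and> (\<forall>j\<in>{1..N}. exp (vr v j k) \<le> pmax)
      \<and> (\<forall>i\<in>{1..M}. \<forall>i'\<in>{1..M}. i \<noteq> i' \<longrightarrow> - vE v i i' k \<le> 0))"
  by (cases v) (auto simp: feasible_def vp_def vr_def vE_def algebra_simps)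

theorem proposition2:
  fixes M N K :: nat
    and T \<alpha>0 \<eta> m pmax Pr0 q :: real
    and c :: "nat \<Rightarrow> nat \<Rightarrow> real" and cr :: "nat \<Rightarrow> real" and Eu :: "nat \<Rightarrow> nat \<Rightarrow> real"
  assumes "0 < M" "M \<le> N" "0 < K"
    and "0 < T" "0 < \<alpha>0" "0 < \<eta>" "\<eta> \<le> 1" "0 < m" "0 < pmax" "0 < Pr0" "0 \<le> q"
    and "\<And>i j. i \<in> {1..M} \<Longrightarrow> j \<in> {1..N} \<Longrightarrow> 0 < c i j"
    and "\<And>j. j \<in> {1..N} \<Longrightarrow> 0 < cr j"
    and "\<And>i k. i \<in> {1..M} \<Longrightarrow> k \<in> {1..K} \<Longrightarrow> 0 \<le> Eu i k"
  shows "convex_fun_vars (Vobj M N K T \<alpha>0 \<eta> m q c cr)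
       \<and> convex_set_vars (feasible M N K T \<eta> m pmax Pr0 c cr Eu)"
proof
  have P: "\<And>k. convex_fun_vars (\<lambda>v. Prout M N m c cr (vp v) (vr v) k)"
    by (rule LC_conv, rule LC_Prout) (use assms in auto)
  have EP: "\<And>i k. convex_fun_vars (\<lambda>v. T * exp (vp v i k))"
    by (rule LC_conv, rule LC_mult, rule LC_const) (use assms in \<open>auto intro: LC_exp LIN_vp1\<close>)
  have ER: "\<And>i k. convex_fun_vars (\<lambda>v. T * exp (vr v i k))"
    by (rule LC_conv, rule LC_mult, rule LC_const) (use assms in \<open>auto intro: LC_exp LIN_vr1\<close>)
  have E1: "\<And>i k. convex_fun_vars (\<lambda>v. exp (vp v i k))"
    by (rule LC_conv) (auto intro: LC_exp LIN_vp1)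
  have E2: "\<And>i k. convex_fun_vars (\<lambda>v. exp (vr v i k))"
    by (rule LC_conv) (auto intro: LC_exp LIN_vr1)
  have L: "\<And>i i' k. convex_fun_vars (\<lambda>v. - vE v i i' k)"
    by (rule LIN_conv) (simp add: LIN_def vcomb_acc algebra_simps)
  have EN: "\<And>i k. convex_fun_vars (\<lambda>v. (\<Sum>l=1..k. T * exp (vp v i l)) + ((\<Sum>l=1..k. \<Sum>i'\<in>{1..M} - {i}. vE v i i' l)
             - \<eta> * (\<Sum>l=1..k. \<Sum>i'\<in>{1..M} - {i}. vE v i' i l)))"
    by (intro CV_add CV_sum EP LIN_conv LIN_diff LIN_sum LIN_scale LIN_vE)
  show "convex_fun_vars (Vobj M N K T \<alpha>0 \<eta> m q c cr)"
    unfolding Vobj_eq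
    apply (rule CV_add)
     apply (rule CV_scale, simp add: assms less_imp_le, rule CV_sum, rule P)
    apply (rule CV_scale, simp add: assms)
    apply (rule CV_sum)
    apply (rule CV_add, rule CV_add)
      apply (rule CV_sum, rule EP)
     apply (rule CV_scale, simp add: assms)
     apply (intro CV_sum LIN_conv LIN_vE)
    apply (rule CV_sum, rule ER)
    done
  show "convex_set_vars (feasible M N K T \<eta> m pmax Pr0 c cr Eu)"
    unfolding convex_set_vars_def
  proof (intro ballI allI impI)
    fix x y :: vars and t :: real
    assume x: "x \<in> feasible M N K T \<eta> m pmax Pr0 c cr Eu" and y: "y \<in> feasible M N K T \<eta> m pmax Pr0 c cr Eu"
      and t: "0 \<le> t \<and> t \<le> 1"
    show "vcomb t x y \<in> feasible M N K T \<eta> m pmax Pr0 c cr Eu"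
      unfolding feas_iff
    proof (intro ballI conjI impI)
      fix k assume k: "k \<in> {1..K}"
      note xk = bspec[OF x[unfolded feas_iff] k] and yk = bspec[OF y[unfolded feas_iff] k]
      show "Prout M N m c cr (vp (vcomb t x y)) (vr (vcomb t x y)) k \<le> Pr0"
        using CV_sub[OF P, where x=x and y=y and t=t and b="Pr0"] xk yk t by blast
      fix i assume i: "i \<in> {1..M}"
      show "(\<Sum>l=1..k. T * exp (vp (vcomb t x y) i l)) + ((\<Sum>l=1..k. \<Sum>i'\<in>{1..M} - {i}. vE (vcomb t x y) i i' l)
             - \<eta> * (\<Sum>l=1..k. \<Sum>i'\<in>{1..M} - {i}. vE (vcomb t x y) i' i l))
           \<le> (\<Sum>l=1..k. Eu i l)"
        using CV_sub[OF EN, where x=x and y=y and t=t] xk yk t i by blast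
      show "exp (vp (vcomb t x y) i k) \<le> pmax"
        using CV_sub[OF E1, where x=x and y=y and t=t and b="pmax"] xk yk t i by blast
      fix i' assume i': "i' \<in> {1..M}" "i \<noteq> i'"
      show "- vE (vcomb t x y) i i' k \<le> 0"
        using CV_sub[OF L, where x=x and y=y and t=t and b="0"] xk yk t i i' by blast
    next
      fix k j assume k: "k \<in> {1..K}" and j: "j \<in> {1..N}"
      note xk = bspec[OF x[unfolded feas_iff] k] and yk = bspec[OF y[unfolded feas_iff] k]
      show "exp (vr (vcomb t x y) j k) \<le> pmax"
        using CV_sub[OF E2, where x=x and y=y and t=t and b="pmax"] xk yk t j by blast
    qed
  qed
qed

end
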